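(* Let $\tau$ be a primitive substitution and $u$ a non-empty prefix of $X_\tau$. Then $\tau$ and $\tau_u$ have the same eigenvalues except perhaps $0$ and roots of unity: a complex number which is neither $0$ nor a root of unity is an eigenvalue of $M_\tau$ if and only if it is an eigenvalue of $M_{\tau_u}$.
   Context: A substitution is a triple $(\tau,A,a)$: $A$ a finite alphabet, $\tau:A\to A^+$ a morphism (extended by concatenation), $a\in A$ with $\tau(a)$ starting with $a$; its fixed point $X_\tau$ is the unique sequence starting with $a$ with $\tau(X_\tau)=X_\tau$. Its matrix $M_\tau$ has $(i,j)$ entry the number of occurrences of $i$ in $\tau(j)$. $\tau$ is primitive if some power of $M_\tau$ is positive; then $X_\tau$ is uniformly recurrent. For a non-empty prefix $u$ of $X_\tau$, a return word on $u$ is a factor $X_{[i,j-1]}$ where $i<j$ are successive occurrences of $u$; there are finitely many, and $X_\tau$ factors uniquely as a concatenation of return words. Enumerating return words in order of first appearance gives a bijection $\Theta_u$ from $R_u=\{1,\dots,N\}$ to the return words, extended to an injective morphism $R_u^*\to A^*$. The return substitution $\tau_u:R_u\to R_u^+$ is the unique morphism with $\Theta_u\tau_u=\tau\Theta_u$. *)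

theory Defs
  imports Complex_Main "HOL-Library.Infinite_Set"
begin

definition subst_word :: "('a \<Rightarrow> 'b list) \<Rightarrow> 'a list \<Rightarrow> 'b list" where
  "subst_word \<tau> w = concat (map \<tau> w)"

text \<open>The fixed point X_tau starting with a: its n-th letter is read off tau^(n+1)(a),
  which is a prefix of X_tau of length at least n+1 when tau(a) = a v with v non-empty.\<close>
definition fixpt :: "('a \<Rightarrow> 'a list) \<Rightarrow> 'a \<Rightarrow> nat \<Rightarrow> 'a" where
  "fixpt \<tau> a n = ((subst_word \<tau> ^^ Suc n) [a]) ! n"

definition subst_matrix :: "('a \<Rightarrow> 'a list) \<Rightarrow> 'a \<Rightarrow> 'a \<Rightarrow> nat" where
  "subst_matrix \<tau> i j = count_list (\<tau> j) i"

definition mat_mult :: "'i set \<Rightarrow> ('i \<Rightarrow> 'i \<Rightarrow> nat) \<Rightarrow> ('i \<Rightarrow> 'i \<Rightarrow> nat) \<Rightarrow> 'i \<Rightarrow> 'i \<Rightarrow> nat" where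
  "mat_mult S M N i j = (\<Sum>k\<in>S. M i k * N k j)"

fun mat_pow :: "'i set \<Rightarrow> ('i \<Rightarrow> 'i \<Rightarrow> nat) \<Rightarrow> nat \<Rightarrow> 'i \<Rightarrow> 'i \<Rightarrow> nat" where
  "mat_pow S M 0 = (\<lambda>i j. if i = j then 1 else 0)"
| "mat_pow S M (Suc k) = mat_mult S (mat_pow S M k) M"

definition primitive_mat :: "'i set \<Rightarrow> ('i \<Rightarrow> 'i \<Rightarrow> nat) \<Rightarrow> bool" where
  "primitive_mat S M \<longleftrightarrow> (\<exists>k. \<forall>i\<in>S. \<forall>j\<in>S. mat_pow S M k i j > 0)"

definition is_eigenvalue :: "'i set \<Rightarrow> ('i \<Rightarrow> 'i \<Rightarrow> nat) \<Rightarrow> complex \<Rightarrow> bool" where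
  "is_eigenvalue S M z \<longleftrightarrow>
     (\<exists>v :: 'i \<Rightarrow> complex. (\<exists>i\<in>S. v i \<noteq> 0) \<and>
        (\<forall>i\<in>S. (\<Sum>j\<in>S. of_nat (M i j) * v j) = z * v i))"

definition root_of_unity :: "complex \<Rightarrow> bool" where
  "root_of_unity z \<longleftrightarrow> (\<exists>n>0. z ^ n = 1)"

definition occurs_at :: "(nat \<Rightarrow> 'a) \<Rightarrow> nat \<Rightarrow> nat \<Rightarrow> bool" where
  "occurs_at X m i \<longleftrightarrow> (\<forall>k<m. X (i + k) = X k)"

definition occ :: "(nat \<Rightarrow> 'a) \<Rightarrow> nat \<Rightarrow> nat \<Rightarrow> nat" where
  "occ X m k = enumerate {i. occurs_at X m i} k"

definition ret_word :: "(nat \<Rightarrow> 'a) \<Rightarrow> nat \<Rightarrow> nat \<Rightarrow> 'a list" where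
  "ret_word X m k = map X [occ X m k ..< occ X m (Suc k)]"

definition first_apps :: "(nat \<Rightarrow> 'a) \<Rightarrow> nat \<Rightarrow> nat set" where
  "first_apps X m = {k. \<forall>l<k. ret_word X m l \<noteq> ret_word X m k}"

text \<open>Number N of return words; R_u = {1..N}.\<close>
definition num_ret :: "(nat \<Rightarrow> 'a) \<Rightarrow> nat \<Rightarrow> nat" where
  "num_ret X m = card (range (ret_word X m))"

definition Theta :: "(nat \<Rightarrow> 'a) \<Rightarrow> nat \<Rightarrow> nat \<Rightarrow> 'a list" where
  "Theta X m r = ret_word X m (sorted_list_of_set (first_apps X m) ! (r - 1))"

text \<open>Return substitution tau_u: the unique morphism R_u \<rightarrow> R_u^+ with
  Theta_u \<circ> tau_u = tau \<circ> Theta_u.\<close>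
definition return_subst :: "('a \<Rightarrow> 'a list) \<Rightarrow> (nat \<Rightarrow> 'a) \<Rightarrow> nat \<Rightarrow> nat \<Rightarrow> nat list" where
  "return_subst \<tau> X m r =
     (THE ws. ws \<noteq> [] \<and> set ws \<subseteq> {1..num_ret X m} \<and>
              subst_word (Theta X m) ws = subst_word \<tau> (Theta X m r))"

end

theory Submission
  imports Defs "Jordan_Normal_Form.Determinant"
begin

lemma sw_Nil[simp]: "subst_word t [] = []" by (simp add: subst_word_def)
lemma sw_Cons[simp]: "subst_word t (x # xs) = t x @ subst_word t xs" by (simp add: subst_word_def)
lemma sw_append[simp]: "subst_word t (xs @ ys) = subst_word t xs @ subst_word t ys"
  by (simp add: subst_word_def)
lemma sw_concat: "subst_word t (concat xss) = concat (map (subst_word t) xss)"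
  by (induction xss) auto

lemma swk_append[simp]: "(subst_word (t::'a\<Rightarrow>'a list) ^^ k) (xs @ ys) = (subst_word t ^^ k) xs @ (subst_word t ^^ k) ys"
  by (induction k) auto
lemma swk_Nil[simp]: "(subst_word (t::'a\<Rightarrow>'a list) ^^ k) [] = []"
  by (induction k) auto
lemma swk_Cons: "(subst_word (t::'a\<Rightarrow>'a list) ^^ k) (x # xs) = (subst_word t ^^ k) [x] @ (subst_word t ^^ k) xs"
  using swk_append[where t=t and k=k and xs="[x]" and ys=xs] by simp
lemma swk_concat: "(subst_word (t::'a\<Rightarrow>'a list) ^^ k) (concat xss) = concat (map (subst_word t ^^ k) xss)"
  by (induction xss) auto
lemma swk_as_concat: "(subst_word (t::'a\<Rightarrow>'a list) ^^ k) w = concat (map (\<lambda>x. (subst_word t ^^ k) [x]) w)"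
proof (induction w)
  case (Cons x w)
  then show ?case using swk_Cons[where t=t and k=k and x=x and xs=w] by simp
qed simp
lemma swk_Suc_single: "(subst_word (t::'a\<Rightarrow>'a list) ^^ Suc k) [x] = (subst_word t ^^ k) (t x)"
  by (simp add: funpow_Suc_right del: funpow.simps)

lemma concat_map_concat_map: "concat (map f (concat (map g w))) = concat (map (\<lambda>r. concat (map f (g r))) w)"
  by (induction w) auto

lemma sum_list_count:
  fixes f :: "'b \<Rightarrow> 'c::comm_semiring_1"
  assumes "finite S" "set w \<subseteq> S"
  shows "sum_list (map f w) = (\<Sum>l\<in>S. of_nat (count_list w l) * f l)"
  using assms(2)
proof (induction w)
  case Nil then show ?case by simp
next
  case (Cons x w)
  have "(\<Sum>l\<in>S. of_nat (count_list (x # w) l) * f l)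
      = (\<Sum>l\<in>S. (if x = l then f l else 0) + of_nat (count_list w l) * f l)"
    by (rule sum.cong) (auto simp: distrib_right)
  also have "\<dots> = f x + (\<Sum>l\<in>S. of_nat (count_list w l) * f l)"
    using Cons.prems assms(1) by (simp add: sum.distrib sum.delta)
  finally show ?case using Cons by simp
qed

lemma count_concat_map:
  assumes "finite S" "set w \<subseteq> S"
  shows "count_list (concat (map h w)) i = (\<Sum>l\<in>S. count_list w l * count_list (h l) i)"
proof -
  have "count_list (concat (map h w)) i = sum_list (map (\<lambda>l. count_list (h l) i) w)"
    by (induction w) auto
  also have "\<dots> = (\<Sum>l\<in>S. of_nat (count_list w l) * count_list (h l) i)"
    by (rule sum_list_count[OF assms])
  finally show ?thesis by simp
qed

lemma count_map_fun:
  fixes w :: "'b::finite list"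
  shows "count_list (map g w) p = (\<Sum>q\<in>{q. g q = p}. count_list w q)"
proof (induction w)
  case Nil then show ?case by simp
next
  case (Cons x w)
  have "(\<Sum>q\<in>{q. g q = p}. count_list (x # w) q) = (\<Sum>q\<in>{q. g q = p}. (if x = q then 1 else 0) + count_list w q)"
    by (rule sum.cong) auto
  also have "\<dots> = (if g x = p then 1 else 0) + (\<Sum>q\<in>{q. g q = p}. count_list w q)"
    by (simp add: sum.distrib sum.delta)
  finally show ?case using Cons by simp
qed

lemma finite_orbit_zero:
  fixes z c :: complex
  assumes "finite V" "\<forall>n. z ^ n * c \<in> V" "z \<noteq> 0" "\<not> root_of_unity z"
  shows "c = 0"
proof (rule ccontr)
  assume c: "c \<noteq> 0"
  have "\<not> inj (\<lambda>n. z ^ n * c)"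
  proof
    assume "inj (\<lambda>n::nat. z ^ n * c)"
    hence "infinite (range (\<lambda>n::nat. z ^ n * c))" using finite_imageD by blast
    moreover have "range (\<lambda>n::nat. z ^ n * c) \<subseteq> V" using assms(2) by auto
    ultimately show False using assms(1) finite_subset by blast
  qed
  then obtain p q where pq: "p \<noteq> q" "z ^ p * c = z ^ q * c" unfolding inj_def by blast
  hence "z ^ p = z ^ q" using c by simp
  moreover have "z ^ p \<noteq> z ^ q" if "p < q" for p q
  proof
    assume e: "z ^ p = z ^ q"
    have "z ^ q = z ^ p * z ^ (q - p)" using that by (simp add: power_add[symmetric])
    hence "z ^ p * z ^ (q - p) = z ^ p * 1" using e by simp
    hence "z ^ (q - p) = 1" using assms(3) by simp
    moreover have "q - p > 0" using that by simp
    ultimately show False using assms(4) unfolding root_of_unity_def by blast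
  qed
  ultimately show False using pq(1) by (metis linorder_neqE_nat)
qed

lemma fun_power_period:
  fixes \<sigma> :: "'b::finite \<Rightarrow> 'b"
  shows "\<exists>p q. p < q \<and> (\<sigma> ^^ p) = (\<sigma> ^^ q)"
proof -
  have "\<not> inj (\<lambda>n::nat. \<sigma> ^^ n)"
  proof
    assume "inj (\<lambda>n::nat. \<sigma> ^^ n)"
    hence "infinite (range (\<lambda>n::nat. \<sigma> ^^ n))" using finite_imageD by blast
    thus False by simp
  qed
  then obtain p q where "p \<noteq> q" "(\<sigma> ^^ p) = (\<sigma> ^^ q)" unfolding inj_def by blast
  thus ?thesis by (metis linorder_neqE_nat)
qed

lemma fun_matrix_eigen_zero:
  fixes \<sigma> :: "'b::finite \<Rightarrow> 'b" and x :: "'b \<Rightarrow> complex"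
  assumes eq: "\<forall>p. z * x p = (\<Sum>q\<in>{q. \<sigma> q = p}. x q)"
    and "z \<noteq> 0" "\<not> root_of_unity z"
  shows "x = (\<lambda>_. 0)"
proof -
  have it: "z ^ n * x p = (\<Sum>q\<in>{q. (\<sigma> ^^ n) q = p}. x q)" for n p
  proof (induction n arbitrary: p)
    case 0 then show ?case by simp
  next
    case (Suc n)
    have "z ^ Suc n * x p = z ^ n * (\<Sum>q\<in>{q. \<sigma> q = p}. x q)" using eq by (simp add: mult.assoc)
    also have "\<dots> = (\<Sum>q\<in>{q. \<sigma> q = p}. z ^ n * x q)" by (simp add: sum_distrib_left)
    also have "\<dots> = (\<Sum>q\<in>{q. \<sigma> q = p}. \<Sum>r\<in>{r. (\<sigma> ^^ n) r = q}. x r)" using Suc by simp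
    also have "\<dots> = (\<Sum>r\<in>(\<Union>q\<in>{q. \<sigma> q = p}. {r. (\<sigma> ^^ n) r = q}). x r)"
      by (rule sum.UNION_disjoint[symmetric]) auto
    also have "(\<Union>q\<in>{q. \<sigma> q = p}. {r. (\<sigma> ^^ n) r = q}) = {r. (\<sigma> ^^ Suc n) r = p}"
      by auto
    finally show ?case .
  qed
  obtain p q where pq: "p < q" "(\<sigma> ^^ p) = (\<sigma> ^^ q)" using fun_power_period by blast
  show ?thesis
  proof
    fix y
    have "z ^ p * x y = z ^ q * x y" using it[of p y] it[of q y] pq by simp
    moreover have "z ^ q = z ^ p * z ^ (q - p)" using pq by (simp add: power_add[symmetric])
    ultimately have "z ^ p * x y = z ^ p * (z ^ (q - p) * x y)" by (simp add: mult.assoc)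
    hence "x y = z ^ (q - p) * x y" using assms(2) by simp
    moreover have "z ^ (q - p) \<noteq> 1"
    proof
      assume "z ^ (q - p) = 1"
      moreover have "q - p > 0" using pq by simp
      ultimately show False using assms(3) unfolding root_of_unity_def by blast
    qed
    ultimately show "x y = 0" by (metis mult_cancel_right2)
  qed
qed


locale sub =
  fixes \<tau> :: "'a::finite \<Rightarrow> 'a list" and a :: 'a and m :: nat
  assumes nonerasing: "\<forall>b. \<tau> b \<noteq> []"
    and starts: "hd (\<tau> a) = a"
    and growing: "2 \<le> length (\<tau> a)"
    and prim: "primitive_mat UNIV (subst_matrix \<tau>)"
    and m_pos: "1 \<le> m"
begin

abbreviation sw where "sw \<equiv> subst_word \<tau>"
definition W where "W n = (sw ^^ n) [a]"
abbreviation X where "X \<equiv> fixpt \<tau> a"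
definition seg where "seg i j = map X [i..<j]"
definition s where "s i = length (sw (seg 0 i))"
abbreviation u where "u \<equiv> seg 0 m"

lemma len_sw: "length w \<le> length (sw w)"
proof (induction w)
  case (Cons x w)
  have "\<tau> x \<noteq> []" using nonerasing by auto
  hence "length (\<tau> x) \<ge> 1" by (cases "\<tau> x") auto
  thus ?case using Cons by simp
qed simp

lemma len_swk: "length w \<le> length ((sw ^^ k) w)"
  by (induction k) (auto intro: order_trans[OF _ len_sw])

lemma W_Suc: "W (Suc n) = sw (W n)" by (simp add: W_def)

lemma W_prefix: "\<exists>ys. W (Suc n) = W n @ ys"
proof (induction n)
  case 0
  have "\<tau> a = a # tl (\<tau> a)" using starts nonerasing by (metis list.collapse)
  then show ?case by (simp add: W_def) (metis append_Cons append_Nil)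
next
  case (Suc n)
  then obtain ys where "W (Suc n) = W n @ ys" by blast
  hence "W (Suc (Suc n)) = W (Suc n) @ sw ys" by (simp add: W_Suc)
  then show ?case by blast
qed

lemma W_prefix_le: "n \<le> n' \<Longrightarrow> \<exists>ys. W n' = W n @ ys"
proof (induction n' rule: dec_induct)
  case base then show ?case by auto
next
  case (step k)
  then show ?case using W_prefix[of k] by (metis append.assoc)
qed

lemma W_hd: "\<exists>ys. W n = a # ys"
  using W_prefix_le[of 0 n] by (auto simp: W_def)

lemma W_len: "n + 1 \<le> length (W n)"
proof (induction n)
  case 0 then show ?case by (simp add: W_def)
next
  case (Suc n)
  obtain ys where ys: "W n = a # ys" using W_hd by blast
  have "length (sw (a # ys)) = length (\<tau> a) + length (sw ys)" by simp
  also have "\<dots> \<ge> 2 + length ys" using growing len_sw[of ys] by simp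
  finally show ?case using Suc ys by (simp add: W_Suc)
qed

lemma X_W: "i < length (W n) \<Longrightarrow> X i = W n ! i"
proof -
  assume i: "i < length (W n)"
  have x: "X i = W (Suc i) ! i" by (simp add: fixpt_def W_def)
  have l: "i < length (W (Suc i))" using W_len[of "Suc i"] by simp
  obtain ys1 where 1: "W (max n (Suc i)) = W n @ ys1" using W_prefix_le[of n "max n (Suc i)"] by auto
  obtain ys2 where 2: "W (max n (Suc i)) = W (Suc i) @ ys2" using W_prefix_le[of "Suc i" "max n (Suc i)"] by auto
  show ?thesis using 1 2 i l x by (metis nth_append)
qed

lemma seg_nth: "t < j - i \<Longrightarrow> seg i j ! t = X (i + t)"
  by (simp add: seg_def)

lemma seg_length[simp]: "length (seg i j) = j - i"
  by (simp add: seg_def)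

lemma seg_append: "i \<le> j \<Longrightarrow> j \<le> l \<Longrightarrow> seg i j @ seg j l = seg i l"
proof -
  assume "i \<le> j" "j \<le> l"
  hence "[i..<l] = [i..<j] @ [j..<l]" using upt_add_eq_append[of i j "l - j"] by simp
  thus ?thesis by (simp add: seg_def)
qed

lemma seg_single: "seg i (Suc i) = [X i]"
  by (simp add: seg_def)

lemma seg_empty[simp]: "seg i i = []"
  by (simp add: seg_def)

lemma take_seg0: "k \<le> l \<Longrightarrow> take k (seg 0 l) = seg 0 k"
  by (simp add: seg_def take_map)

lemma drop_seg0: "k \<le> l \<Longrightarrow> drop k (seg 0 l) = seg k l"
  by (simp add: seg_def drop_map)

lemma W_seg: "W n = seg 0 (length (W n))"
  by (rule nth_equalityI) (auto simp: seg_nth X_W)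

lemma seg0_W: "i \<le> length (W n) \<Longrightarrow> seg 0 i = take i (W n)"
  by (metis W_seg take_seg0)

lemma sw_seg0: "sw (seg 0 i) = seg 0 (s i)"
proof -
  have il: "i \<le> length (W i)" using W_len[of i] by simp
  have 1: "W i = seg 0 i @ drop i (W i)" using seg0_W[OF il] by simp
  have "W (Suc i) = sw (seg 0 i) @ sw (drop i (W i))" using 1 W_Suc by (metis sw_append)
  hence 2: "sw (seg 0 i) = take (s i) (W (Suc i))" by (simp add: s_def)
  have "s i \<le> length (W (Suc i))" using 2 W_Suc \<open>W (Suc i) = _\<close> by (simp add: s_def)
  thus ?thesis using 2 seg0_W by simp
qed

lemma swk_seg0: "(sw ^^ k) (seg 0 i) = seg 0 ((s ^^ k) i)"
  by (induction k) (auto simp: sw_seg0)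

lemma S_zero: "(s ^^ k) 0 = 0"
  using swk_seg0[of k 0] by (metis length_0_conv seg_empty seg_length swk_Nil diff_zero)

lemma S_len: "(s ^^ k) i = length ((sw ^^ k) (seg 0 i))"
  using swk_seg0 by simp

lemma S_ge: "i \<le> (s ^^ k) i"
  using S_len len_swk[of "seg 0 i" k] by simp

lemma swk_seg: assumes "i \<le> j"
  shows "(sw ^^ k) (seg i j) = seg ((s ^^ k) i) ((s ^^ k) j) \<and> (s ^^ k) i \<le> (s ^^ k) j"
proof -
  have "seg 0 j = seg 0 i @ seg i j" using seg_append[of 0 i j] assms by simp
  hence e: "seg 0 ((s ^^ k) j) = seg 0 ((s ^^ k) i) @ (sw ^^ k) (seg i j)"
    using swk_seg0 by (metis swk_append)
  hence le: "(s ^^ k) i \<le> (s ^^ k) j" by (metis le_add1 length_append seg_length diff_zero)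
  have "(sw ^^ k) (seg i j) = drop ((s ^^ k) i) (seg 0 ((s ^^ k) j))" using e by simp
  thus ?thesis using drop_seg0 le by simp
qed

lemma swk_single: "(sw ^^ k) [X i] = seg ((s ^^ k) i) ((s ^^ k) (Suc i))"
  using swk_seg[of i "Suc i" k] seg_single by simp

lemma swk_nonempty: "(sw ^^ k) [x] \<noteq> []"
  using len_swk[of "[x]" k] by auto

lemma S_strict: "(s ^^ k) i < (s ^^ k) (Suc i)"
proof -
  have "seg ((s ^^ k) i) ((s ^^ k) (Suc i)) \<noteq> []" using swk_single[of k i] swk_nonempty[of k "X i"] by simp
  hence "length (seg ((s ^^ k) i) ((s ^^ k) (Suc i))) > 0" by blast
  thus ?thesis by simp
qed

lemma S_mono: "strict_mono (s ^^ k)"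
  unfolding strict_mono_def using lift_Suc_mono_less[of "s ^^ k", OF S_strict] by blast

lemma S_block: "t < length ((sw ^^ k) [X i]) \<Longrightarrow> X ((s ^^ k) i + t) = ((sw ^^ k) [X i]) ! t"
  using swk_single[of k i] by (simp add: seg_nth)

section \<open>Primitivity\<close>

lemma mat_pow_count: "mat_pow UNIV (subst_matrix \<tau>) k i j = count_list ((sw ^^ k) [j]) i"
proof (induction k arbitrary: i j)
  case 0 then show ?case by simp
next
  case (Suc k)
  have "mat_pow UNIV (subst_matrix \<tau>) (Suc k) i j = (\<Sum>l\<in>UNIV. count_list ((sw ^^ k) [l]) i * count_list (\<tau> j) l)"
  proof -
    have "mat_pow UNIV (subst_matrix \<tau>) (Suc k) i j = (\<Sum>l\<in>UNIV. mat_pow UNIV (subst_matrix \<tau>) k i l * subst_matrix \<tau> l j)"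
      by (simp add: mat_mult_def)
    thus ?thesis by (simp only: Suc.IH subst_matrix_def)
  qed
  also have "\<dots> = count_list (concat (map (\<lambda>x. (sw ^^ k) [x]) (\<tau> j))) i"
    by (subst count_concat_map[of UNIV]) (auto simp: mult.commute)
  also have "concat (map (\<lambda>x. (sw ^^ k) [x]) (\<tau> j)) = (sw ^^ Suc k) [j]"
    by (metis swk_Suc_single swk_as_concat)
  finally show ?case .
qed

lemma prim_k0: "\<exists>k0. \<forall>i j. i \<in> set ((sw ^^ k0) [j])"
proof -
  obtain k where "\<forall>i j. mat_pow UNIV (subst_matrix \<tau>) k i j > 0"
    using prim unfolding primitive_mat_def by blast
  hence "\<forall>i j. count_list ((sw ^^ k) [j]) i > 0" by (simp add: mat_pow_count)
  thus ?thesis by (metis count_list_0_iff not_gr0)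
qed

definition k0 where "k0 = (SOME k. \<forall>i j. i \<in> set ((sw ^^ k) [j]))"

lemma k0: "i \<in> set ((sw ^^ k0) [j])"
  using someI_ex[OF prim_k0] unfolding k0_def by blast

lemma letter_occurs: "\<exists>i. X i = b"
proof -
  have "b \<in> set (W k0)" using k0 by (simp add: W_def)
  hence "b \<in> set (seg 0 (length (W k0)))" using W_seg by metis
  thus ?thesis by (auto simp: seg_def)
qed

lemma contains_W: "\<exists>p q. (sw ^^ (n + k0)) [c] = p @ W n @ q"
proof -
  obtain xs ys where "(sw ^^ k0) [c] = xs @ a # ys" using k0[of a c] by (meson split_list)
  hence "(sw ^^ (n + k0)) [c] = (sw ^^ n) xs @ W n @ (sw ^^ n) ys"
    by (simp add: funpow_add W_def swk_Cons[where xs=ys])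
  thus ?thesis by blast
qed

lemma long: "n + 1 \<le> length ((sw ^^ (n + k0)) [c])"
  using contains_W[of n c] W_len[of n] by auto

lemma u_in: "\<exists>p q. (sw ^^ (m + k0)) [c] = p @ u @ q"
proof -
  have "m \<le> length (W m)" using W_len[of m] by simp
  hence "W m = u @ drop m (W m)" using seg0_W by simp
  thus ?thesis using contains_W[of m c] by (metis append.assoc)
qed

end


lemma locate_strict_mono:
  fixes f :: "nat \<Rightarrow> nat"
  assumes "strict_mono f" "f 0 = 0"
  shows "\<exists>i. f i \<le> x \<and> x < f (Suc i)"
proof -
  have "x < f (Suc x)" using strict_mono_imp_increasing[OF assms(1), of "Suc x"] by (simp add: Suc_le_eq)
  hence ex: "\<exists>i. x < f (Suc i)" by blast
  define i where "i = (LEAST i. x < f (Suc i))"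
  have 1: "x < f (Suc i)" unfolding i_def by (rule LeastI_ex[OF ex])
  have "f i \<le> x"
  proof (cases i)
    case 0 then show ?thesis using assms(2) by simp
  next
    case (Suc j)
    have "\<not> x < f (Suc j)" using Suc not_less_Least[of j "\<lambda>i. x < f (Suc i)"] i_def by simp
    then show ?thesis using Suc by simp
  qed
  thus ?thesis using 1 by blast
qed

context sub
begin

lemma occ_iff: "occurs_at X m p0 \<longleftrightarrow> seg p0 (p0 + m) = u"
proof -
  have "seg p0 (p0 + m) = u \<longleftrightarrow> (\<forall>k<m. seg p0 (p0 + m) ! k = u ! k)"
    by (simp add: list_eq_iff_nth_eq)
  also have "\<dots> \<longleftrightarrow> (\<forall>k<m. X (p0 + k) = X k)" by (simp add: seg_nth)
  finally show ?thesis unfolding occurs_at_def by simp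
qed

lemma X0: "X 0 = a"
  using X_W[of 0 0] by (simp add: W_def)

lemma occ0: "occurs_at X m 0" by (simp add: occurs_at_def)

lemma occ_a: "occurs_at X m p0 \<Longrightarrow> X p0 = a"
proof -
  assume "occurs_at X m p0"
  moreover have "0 < m" using m_pos by simp
  ultimately have "X (p0 + 0) = X 0" unfolding occurs_at_def by blast
  thus ?thesis using X0 by simp
qed

lemma occ_s: assumes "occurs_at X m p0" shows "occurs_at X m ((s ^^ k) p0)"
proof -
  have 1: "(sw ^^ k) (seg p0 (p0 + m)) = seg ((s ^^ k) p0) ((s ^^ k) (p0 + m))" using swk_seg[of p0 "p0 + m" k] by simp
  have 2: "(sw ^^ k) u = seg 0 ((s ^^ k) m)" using swk_seg0[of k m] .
  have e: "seg ((s ^^ k) p0) ((s ^^ k) (p0 + m)) = seg 0 ((s ^^ k) m)" using 1 2 assms occ_iff by simp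
  have mm: "m \<le> (s ^^ k) m" by (rule S_ge)
  show ?thesis unfolding occurs_at_def
  proof (intro allI impI)
    fix d assume d: "d < m"
    have "d < length (seg 0 ((s ^^ k) m))" using d mm by simp
    hence l: "d < (s ^^ k) (p0 + m) - (s ^^ k) p0" using e by (metis seg_length)
    have "X ((s ^^ k) p0 + d) = seg ((s ^^ k) p0) ((s ^^ k) (p0 + m)) ! d" using l by (simp add: seg_nth)
    also have "\<dots> = X d" using e d mm by (simp add: seg_nth)
    finally show "X ((s ^^ k) p0 + d) = X d" .
  qed
qed

definition KK where "KK = m + k0"
definition Cb where "Cb = Max (range (\<lambda>b. length ((sw ^^ KK) [b])))"
definition G where "G = 2 * Cb"

lemma Cb: "length ((sw ^^ KK) [b]) \<le> Cb"
  unfolding Cb_def by (rule Max_ge) auto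

lemma next_occ: assumes "occurs_at X m p0" shows "\<exists>q. occurs_at X m q \<and> p0 < q \<and> q \<le> p0 + G"
proof -
  let ?S = "s ^^ KK"
  obtain i where i: "?S i \<le> p0" "p0 < ?S (Suc i)"
    using locate_strict_mono[OF S_mono S_zero] by blast
  obtain p q where pq: "(sw ^^ KK) [X (Suc i)] = p @ u @ q" using u_in unfolding KK_def by blast
  define q0 where "q0 = ?S (Suc i) + length p"
  have occ: "occurs_at X m q0" unfolding occurs_at_def
  proof (intro allI impI)
    fix d assume d: "d < m"
    have "X (q0 + d) = X (?S (Suc i) + (length p + d))" by (simp add: q0_def add.assoc)
    also have "\<dots> = ((sw ^^ KK) [X (Suc i)]) ! (length p + d)"
      using pq d by (intro S_block) simp
    also have "\<dots> = u ! d" using pq d by (simp add: nth_append)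
    also have "\<dots> = X d" using d by (simp add: seg_nth)
    finally show "X (q0 + d) = X d" .
  qed
  have b1: "?S (Suc i) - ?S i \<le> Cb" using swk_single[of KK i] Cb[of "X i"] by (metis seg_length)
  have b2: "length p \<le> Cb" using pq Cb[of "X (Suc i)"] by (metis le_add1 length_append order_trans)
  have "q0 \<le> p0 + G" using i b1 b2 unfolding q0_def G_def by linarith
  moreover have "p0 < q0" using i unfolding q0_def by simp
  ultimately show ?thesis using occ by blast
qed

abbreviation Occs where "Occs \<equiv> {i. occurs_at X m i}"

lemma O_infinite: "infinite Occs"
proof
  assume f: "finite Occs"
  have "Occs \<noteq> {}" using occ0 by auto
  hence "Max Occs \<in> Occs" using f Max_in by blast
  then obtain q where "q \<in> Occs" "Max Occs < q" using next_occ by auto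
  thus False using f by (meson Max_ge leD)
qed

abbreviation oc where "oc \<equiv> occ X m"

lemma oc_in: "occurs_at X m (oc t)"
  using enumerate_in_set[OF O_infinite] by (simp add: occ_def)

lemma oc_less: "oc t < oc t' \<longleftrightarrow> t < t'"
  using O_infinite by (simp add: occ_def)

lemma oc_le: "oc t \<le> oc t' \<longleftrightarrow> t \<le> t'"
  using O_infinite by (simp add: occ_def)

lemma oc_all: "occurs_at X m q \<Longrightarrow> \<exists>t. oc t = q"
  using enumerate_Ex[OF O_infinite] by (simp add: occ_def)

lemma oc_0: "oc 0 = 0"
proof -
  have "oc 0 = (LEAST n. n \<in> Occs)" unfolding occ_def by (rule enumerate_0)
  also have "\<dots> = 0" using occ0 by (simp add: Least_eq_0)
  finally show ?thesis .
qed

lemma oc_between: "occurs_at X m q \<Longrightarrow> oc t < q \<Longrightarrow> oc (Suc t) \<le> q"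
  by (metis Suc_leI oc_all oc_le oc_less)

lemma oc_gap: "oc (Suc t) \<le> oc t + G"
  using next_occ[OF oc_in[of t]] oc_between by (meson order_trans)

lemma oc_strict: "strict_mono oc"
  unfolding strict_mono_def using oc_less by blast

lemma oc_locate: "\<exists>t. oc t \<le> i \<and> i < oc (Suc t)"
  using locate_strict_mono[OF oc_strict oc_0] .

lemma no_occ_between: "oc t < q \<Longrightarrow> q < oc (Suc t) \<Longrightarrow> \<not> occurs_at X m q"
  using oc_between by (meson leD)

abbreviation rw where "rw \<equiv> ret_word X m"

lemma rw_seg: "rw t = seg (oc t) (oc (Suc t))"
  by (simp add: ret_word_def seg_def)

lemma rw_len: "length (rw t) \<le> G" "rw t \<noteq> []"
proof -
  show "length (rw t) \<le> G" using oc_gap[of t] by (simp add: rw_seg)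
  have "length (rw t) > 0" using oc_less[of t "Suc t"] by (simp add: rw_seg)
  thus "rw t \<noteq> []" by blast
qed

lemma rw_hd: "\<exists>ys. rw t = a # ys"
proof -
  have "rw t \<noteq> []" by (rule rw_len)
  moreover have "rw t ! 0 = a" using oc_less[of t "Suc t"] occ_a[OF oc_in[of t]]
    by (simp add: rw_seg seg_nth)
  ultimately have "hd (rw t) = a" by (simp add: hd_conv_nth)
  moreover have "rw t = hd (rw t) # tl (rw t)" using rw_len(2)[of t] by simp
  ultimately show ?thesis by metis
qed

lemma rw_range_finite: "finite (range rw)"
proof -
  have "range rw \<subseteq> {xs. length xs \<le> G}" using rw_len by auto
  moreover have "finite {xs::'a list. length xs \<le> G}" using finite_lists_length_le[of "UNIV::'a set" G] by simp
  ultimately show ?thesis using finite_subset by blast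
qed

abbreviation N where "N \<equiv> num_ret X m"
abbreviation FA where "FA \<equiv> first_apps X m"
abbreviation Th where "Th \<equiv> Theta X m"
abbreviation R where "R \<equiv> {1..N}"

lemma FA_inj: "inj_on rw FA"
proof (rule inj_onI)
  fix k l assume "k \<in> FA" "l \<in> FA" "rw k = rw l"
  show "k = l"
  proof (rule ccontr)
    assume "k \<noteq> l"
    hence "k < l \<or> l < k" by arith
    moreover have "\<forall>j<k. rw j \<noteq> rw k" using \<open>k \<in> FA\<close> unfolding first_apps_def by simp
    moreover have "\<forall>j<l. rw j \<noteq> rw l" using \<open>l \<in> FA\<close> unfolding first_apps_def by simp
    ultimately show False using \<open>rw k = rw l\<close> by metis
  qed
qed

lemma FA_img: "rw ` FA = range rw"
proof
  show "range rw \<subseteq> rw ` FA"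
  proof
    fix w assume "w \<in> range rw"
    then obtain t where t: "rw t = w" by blast
    define k where "k = (LEAST k. rw k = w)"
    have k: "rw k = w" unfolding k_def using LeastI[of "\<lambda>k. rw k = w" t] t by simp
    have "\<forall>l<k. rw l \<noteq> rw k"
    proof (intro allI impI)
      fix l assume "l < k"
      hence "\<not> (rw l = w)" unfolding k_def by (rule not_less_Least)
      thus "rw l \<noteq> rw k" using k by simp
    qed
    hence "k \<in> FA" unfolding first_apps_def by simp
    thus "w \<in> rw ` FA" using k by (metis imageI)
  qed
  show "rw ` FA \<subseteq> range rw" by (rule image_subsetI) simp
qed

lemma FA_finite: "finite FA"
  using finite_imageD[of rw FA] FA_inj FA_img rw_range_finite by simp

lemma FA_card: "card FA = N"
  using card_image[OF FA_inj] FA_img by (simp add: num_ret_def)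

abbreviation fl where "fl \<equiv> sorted_list_of_set FA"

lemma fl_props: "length fl = N" "distinct fl" "set fl = FA"
  using FA_finite FA_card by (auto simp: length_sorted_list_of_set)

lemma Th_def2: "Th r = rw (fl ! (r - 1))"
  by (simp add: Theta_def)

lemma Th_inj: "inj_on Th R"
proof (rule inj_onI)
  fix r r' assume r: "r \<in> R" "r' \<in> R" "Th r = Th r'"
  have i: "r - 1 < length fl" "r' - 1 < length fl" using r fl_props by auto
  have "fl ! (r - 1) \<in> FA" "fl ! (r' - 1) \<in> FA" using i fl_props(3) nth_mem by blast+
  hence "fl ! (r - 1) = fl ! (r' - 1)" using FA_inj r(3) unfolding Th_def2 inj_on_def by blast
  hence "r - 1 = r' - 1" using fl_props(2) i nth_eq_iff_index_eq by blast
  thus "r = r'" using r by auto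
qed

lemma Th_img: "Th ` R = range rw"
proof -
  have "(\<lambda>r. fl ! (r - 1)) ` R = set fl"
  proof
    show "(\<lambda>r. fl ! (r - 1)) ` R \<subseteq> set fl" using fl_props(1) by auto
    show "set fl \<subseteq> (\<lambda>r. fl ! (r - 1)) ` R"
    proof
      fix x assume "x \<in> set fl"
      then obtain i where i: "i < length fl" "fl ! i = x" by (metis in_set_conv_nth)
      hence "Suc i \<in> R" "fl ! (Suc i - 1) = x" using fl_props(1) by auto
      thus "x \<in> (\<lambda>r. fl ! (r - 1)) ` R" by force
    qed
  qed
  moreover have "Th ` R = rw ` ((\<lambda>r. fl ! (r - 1)) ` R)" unfolding Th_def2 by (simp add: image_image)
  ultimately have "Th ` R = rw ` set fl" by simp
  thus ?thesis using fl_props(3) FA_img by simp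
qed

lemma Th_rw: "r \<in> R \<Longrightarrow> \<exists>t. Th r = rw t"
  using Th_img by blast

definition Y where "Y t = inv_into R Th (rw t)"

lemma Y_in: "Y t \<in> R" and Th_Y: "Th (Y t) = rw t"
proof -
  have "rw t \<in> Th ` R" using Th_img by simp
  thus "Y t \<in> R" unfolding Y_def by (rule inv_into_into)
  show "Th (Y t) = rw t" unfolding Y_def using \<open>rw t \<in> Th ` R\<close> by (rule f_inv_into_f)
qed

lemma Th_nonempty: "r \<in> R \<Longrightarrow> Th r \<noteq> []"
proof -
  assume "r \<in> R" then obtain t where "Th r = rw t" using Th_rw by blast
  thus ?thesis using rw_len(2)[of t] by simp
qed

lemma Th_hd: "r \<in> R \<Longrightarrow> \<exists>ys. Th r = a # ys"
proof -
  assume "r \<in> R" then obtain t where "Th r = rw t" using Th_rw by blast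
  thus ?thesis using rw_hd[of t] by simp
qed

lemma ThY: "Th \<circ> Y = rw"
  by (rule ext) (simp add: Th_Y)

lemma decode: "k1 \<le> k2 \<Longrightarrow> concat (map (Th \<circ> Y) [k1..<k2]) = seg (oc k1) (oc k2)"
proof (induction k2 rule: dec_induct)
  case base then show ?case by simp
next
  case (step k)
  have "concat (map (Th \<circ> Y) [k1..<Suc k]) = seg (oc k1) (oc k) @ rw k"
    using step by (simp add: ThY)
  also have "\<dots> = seg (oc k1) (oc (Suc k))"
    using step oc_le[of k1 k] oc_le[of k "Suc k"] by (simp add: rw_seg seg_append)
  finally show ?case .
qed

end


context sub
begin

lemma rwu: "rw t @ u = seg (oc t) (oc (Suc t) + m)"
  using seg_append[of "oc t" "oc (Suc t)" "oc (Suc t) + m"] oc_in[of "Suc t"] oc_less[of t "Suc t"]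
  by (simp add: rw_seg occ_iff)

lemma rwu_nth: "d < m \<Longrightarrow> (rw t @ u) ! d = X d"
proof -
  assume d: "d < m"
  have "d < oc (Suc t) + m - oc t" using d oc_le[of t "Suc t"] by simp
  hence "(rw t @ u) ! d = X (oc t + d)" by (simp add: rwu seg_nth)
  also have "\<dots> = X d" using oc_in[of t] d unfolding occurs_at_def by simp
  finally show ?thesis .
qed

lemma suffix_code:
  assumes r: "r \<in> R" "r' \<in> R" and e: "Th r = p @ Th r'"
  shows "p = []"
proof (rule ccontr)
  assume p: "p \<noteq> []"
  obtain t where t: "Th r = rw t" using Th_rw r(1) by blast
  obtain t' where t': "Th r' = rw t'" using Th_rw r(2) by blast
  define q where "q = oc t + length p"
  have ne: "Th r' \<noteq> []" using Th_nonempty r(2) by blast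
  have q1: "oc t < q" using p unfolding q_def by simp
  have "length (rw t) = length p + length (Th r')" using e t by simp
  hence "length p < length (rw t)" using ne by simp
  hence q2: "q < oc (Suc t)" unfolding q_def by (simp add: rw_seg)
  have "occurs_at X m q" unfolding occurs_at_def
  proof (intro allI impI)
    fix d assume d: "d < m"
    have V: "rw t @ u = p @ (rw t' @ u)" using e t t' by simp
    have l: "length p + d < oc (Suc t) + m - oc t" using q2 d unfolding q_def by simp
    have "X (q + d) = (rw t @ u) ! (length p + d)"
      using l by (simp add: rwu seg_nth q_def add.assoc)
    also have "\<dots> = (rw t' @ u) ! d" using V by (simp add: nth_append)
    also have "\<dots> = X d" using rwu_nth d by simp
    finally show "X (q + d) = X d" .
  qed
  thus False using no_occ_between q1 q2 by blast
qed

lemma code: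
  assumes "set ws \<subseteq> R" "set ws' \<subseteq> R" "concat (map Th ws) = concat (map Th ws')"
  shows "ws = ws'"
  using assms
proof (induction ws arbitrary: ws' rule: rev_induct)
  case Nil
  show ?case
  proof (cases ws' rule: rev_exhaust)
    case (snoc ys y)
    then have "Th y \<noteq> []" using Nil Th_nonempty by auto
    then show ?thesis using Nil snoc by simp
  qed simp
next
  case (snoc r ws)
  show ?case
  proof (cases ws' rule: rev_exhaust)
    case Nil
    then have "Th r \<noteq> []" using snoc Th_nonempty by auto
    then show ?thesis using snoc Nil by simp
  next
    case (snoc ws0 r')
    have rR: "r \<in> R" "r' \<in> R" using snoc.prems snoc by auto
    have "concat (map Th ws) @ Th r = concat (map Th ws0) @ Th r'"
      using snoc.prems snoc by simp
    then obtain us where us: "(concat (map Th ws) = concat (map Th ws0) @ us \<and> us @ Th r = Th r')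
       \<or> (concat (map Th ws) @ us = concat (map Th ws0) \<and> Th r = us @ Th r')"
      using append_eq_append_conv2 by blast
    have 1: "Th r = Th r'" and 2: "concat (map Th ws) = concat (map Th ws0)"
    proof -
      have "Th r = Th r' \<and> concat (map Th ws) = concat (map Th ws0)"
      proof (cases "concat (map Th ws) = concat (map Th ws0) @ us \<and> us @ Th r = Th r'")
        case True
        hence "us = []" using suffix_code[of r' r us] rR by simp
        thus ?thesis using True by simp
      next
        case False
        hence F: "concat (map Th ws) @ us = concat (map Th ws0) \<and> Th r = us @ Th r'" using us by blast
        hence "us = []" using suffix_code[of r r' us] rR by simp
        thus ?thesis using F by simp
      qed
      thus "Th r = Th r'" "concat (map Th ws) = concat (map Th ws0)" by simp_all
    qed
    have "r = r'" using 1 Th_inj rR unfolding inj_on_def by blast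
    moreover have "ws = ws0" using snoc.IH[OF _ _ 2] snoc.prems snoc by auto
    ultimately show ?thesis using snoc by simp
  qed
qed

lemma sw_seg: "i \<le> j \<Longrightarrow> sw (seg i j) = seg (s i) (s j) \<and> s i \<le> s j"
  using swk_seg[of i j 1] by simp

abbreviation tu where "tu \<equiv> return_subst \<tau> X m"

lemma tu_exists: assumes r: "r \<in> R"
  shows "\<exists>ws. ws \<noteq> [] \<and> set ws \<subseteq> R \<and> concat (map Th ws) = sw (Th r)"
proof -
  obtain t where t: "Th r = rw t" using Th_rw r by blast
  have l: "oc t \<le> oc (Suc t)" using oc_le by simp
  have e: "sw (Th r) = seg (s (oc t)) (s (oc (Suc t)))" using sw_seg[OF l] t by (simp add: rw_seg)
  have "occurs_at X m ((s ^^ 1) (oc t))" by (rule occ_s[OF oc_in])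
  hence "occurs_at X m (s (oc t))" by simp
  then obtain k1 where k1: "oc k1 = s (oc t)" using oc_all by blast
  have "occurs_at X m ((s ^^ 1) (oc (Suc t)))" by (rule occ_s[OF oc_in])
  hence "occurs_at X m (s (oc (Suc t)))" by simp
  then obtain k2 where k2: "oc k2 = s (oc (Suc t))" using oc_all by blast
  have "s (oc t) < s (oc (Suc t))" using S_mono[of 1] oc_less[of t "Suc t"] unfolding strict_mono_def by simp
  hence k12: "k1 < k2" using k1 k2 oc_less[of k1 k2] by simp
  let ?ws = "map Y [k1..<k2]"
  have "concat (map Th ?ws) = seg (oc k1) (oc k2)" using decode[of k1 k2] k12 by simp
  hence "concat (map Th ?ws) = sw (Th r)" using e k1 k2 by simp
  moreover have "?ws \<noteq> []" using k12 by simp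
  moreover have "set ?ws \<subseteq> R" using Y_in by auto
  ultimately show ?thesis by blast
qed

lemma tu_spec: assumes r: "r \<in> R"
  shows "tu r \<noteq> [] \<and> set (tu r) \<subseteq> R \<and> concat (map Th (tu r)) = sw (Th r)"
proof -
  let ?P = "\<lambda>ws. ws \<noteq> [] \<and> set ws \<subseteq> R \<and> subst_word Th ws = subst_word \<tau> (Th r)"
  obtain ws where ws: "?P ws" using tu_exists[OF r] by (auto simp: subst_word_def)
  have uniq: "ws' = ws" if "?P ws'" for ws'
    using code[of ws' ws] that ws by (simp add: subst_word_def)
  have "?P (THE ws. ?P ws)" using theI[of ?P ws] ws uniq by blast
  thus ?thesis unfolding return_subst_def by (simp add: subst_word_def)
qed

abbreviation swu where "swu \<equiv> subst_word tu"

lemma swu_iter: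
  assumes "set ws \<subseteq> R"
  shows "set ((swu ^^ k) ws) \<subseteq> R \<and> concat (map Th ((swu ^^ k) ws)) = (sw ^^ k) (concat (map Th ws))"
proof (induction k)
  case 0 then show ?case using assms by simp
next
  case (Suc k)
  let ?w = "(swu ^^ k) ws"
  have 1: "set (swu ?w) \<subseteq> R"
  proof
    fix x assume "x \<in> set (swu ?w)"
    then obtain b where b: "b \<in> set ?w" "x \<in> set (tu b)" by (auto simp: subst_word_def)
    have "b \<in> R" using b(1) Suc by blast
    thus "x \<in> R" using tu_spec b(2) by blast
  qed
  have "concat (map Th (swu ?w)) = concat (map (\<lambda>r. concat (map Th (tu r))) ?w)"
    unfolding subst_word_def by (rule concat_map_concat_map)
  also have "\<dots> = concat (map (\<lambda>r. sw (Th r)) ?w)"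
    using Suc tu_spec by (intro arg_cong[where f=concat] map_cong) auto
  also have "\<dots> = sw (concat (map Th ?w))" by (simp add: sw_concat comp_def)
  also have "\<dots> = (sw ^^ Suc k) (concat (map Th ws))" using Suc by simp
  finally show ?case using 1 by simp
qed

end


definition bl :: "'b list \<Rightarrow> 'b \<Rightarrow> ('b \<times> 'b) list" where
  "bl w c = zip w (tl w @ [c])"

lemma count_upt_card: "count_list (map f [k1..<k2]) x = card {t\<in>{k1..<k2}. f t = x}"
proof (induction k2)
  case 0 then show ?case by simp
next
  case (Suc k2)
  show ?case
  proof (cases "k1 \<le> k2")
    case True
    have e: "{t\<in>{k1..<Suc k2}. f t = x} = {t\<in>{k1..<k2}. f t = x} \<union> (if f k2 = x then {k2} else {})"
      using True by (auto simp: less_Suc_eq)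
    have fin: "finite {t\<in>{k1..<k2}. f t = x}" by simp
    have nin: "k2 \<notin> {t\<in>{k1..<k2}. f t = x}" by simp
    have "card {t\<in>{k1..<Suc k2}. f t = x} = card {t\<in>{k1..<k2}. f t = x} + (if f k2 = x then 1 else 0)"
      unfolding e using fin nin by (simp add: card_insert_if)
    then show ?thesis using Suc True by simp
  next
    case False
    then show ?thesis by simp
  qed
qed

lemma card_split_mono:
  fixes S :: "nat \<Rightarrow> nat"
  assumes "mono S" "i1 \<le> i2"
  shows "card {q. S i1 \<le> q \<and> q < S i2 \<and> P q} = (\<Sum>i\<in>{i1..<i2}. card {q. S i \<le> q \<and> q < S (Suc i) \<and> P q})"
  using assms(2)
proof (induction i2 rule: dec_induct)
  case base then show ?case by simp
next
  case (step k)
  have le: "S i1 \<le> S k" "S k \<le> S (Suc k)" using assms(1) step(1) by (auto simp: mono_def)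
  have e: "{q. S i1 \<le> q \<and> q < S (Suc k) \<and> P q} = {q. S i1 \<le> q \<and> q < S k \<and> P q} \<union> {q. S k \<le> q \<and> q < S (Suc k) \<and> P q}"
    using le by auto
  have "card {q. S i1 \<le> q \<and> q < S (Suc k) \<and> P q} = card {q. S i1 \<le> q \<and> q < S k \<and> P q} + card {q. S k \<le> q \<and> q < S (Suc k) \<and> P q}"
    unfolding e by (rule card_Un_disjoint) auto
  then show ?case using step by simp
qed

context sub
begin

definition rwat where "rwat q r' \<longleftrightarrow> (\<exists>t. oc t = q \<and> Y t = r')"

lemma rwat_iff:
  assumes r': "r' \<in> R"
  shows "rwat q r' \<longleftrightarrow> (\<forall>d < length (Th r') + m. X (q + d) = (Th r' @ u) ! d) \<and>
                          (\<forall>e. 0 < e \<and> e < length (Th r') \<longrightarrow> \<not> occurs_at X m (q + e))"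
proof
  assume "rwat q r'"
  then obtain t where t: "oc t = q" "Y t = r'" unfolding rwat_def by blast
  have th: "Th r' = rw t" using t Th_Y by blast
  have l: "oc t \<le> oc (Suc t)" using oc_le by simp
  show "(\<forall>d < length (Th r') + m. X (q + d) = (Th r' @ u) ! d) \<and>
        (\<forall>e. 0 < e \<and> e < length (Th r') \<longrightarrow> \<not> occurs_at X m (q + e))"
  proof (intro conjI allI impI)
    fix d assume "d < length (Th r') + m"
    hence "d < oc (Suc t) + m - oc t" using th l by (simp add: rw_seg)
    thus "X (q + d) = (Th r' @ u) ! d" using th t by (simp add: rwu seg_nth)
  next
    fix e assume "0 < e \<and> e < length (Th r')"
    hence "oc t < q + e" "q + e < oc (Suc t)" using th t l by (auto simp: rw_seg)
    thus "\<not> occurs_at X m (q + e)" using no_occ_between by blast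
  qed
next
  assume A: "(\<forall>d < length (Th r') + m. X (q + d) = (Th r' @ u) ! d) \<and>
             (\<forall>e. 0 < e \<and> e < length (Th r') \<longrightarrow> \<not> occurs_at X m (q + e))"
  obtain t' where t': "Th r' = rw t'" using Th_rw r' by blast
  let ?L = "length (Th r')"
  have Lpos: "0 < ?L" using Th_nonempty r' by blast
  have "occurs_at X m q" unfolding occurs_at_def
  proof (intro allI impI)
    fix d assume d: "d < m"
    have "X (q + d) = (Th r' @ u) ! d" using A d by simp
    also have "\<dots> = X d" using t' rwu_nth d by simp
    finally show "X (q + d) = X d" .
  qed
  then obtain t where t: "oc t = q" using oc_all by blast
  have occL: "occurs_at X m (q + ?L)" unfolding occurs_at_def
  proof (intro allI impI)
    fix d assume d: "d < m"
    have "X (q + ?L + d) = (Th r' @ u) ! (?L + d)" using A d by (simp add: add.assoc)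
    also have "\<dots> = u ! d" by (simp add: nth_append)
    also have "\<dots> = X d" using d by (simp add: seg_nth)
    finally show "X (q + ?L + d) = X d" .
  qed
  have le1: "oc (Suc t) \<le> q + ?L" using oc_between[OF occL] t Lpos by simp
  have le2: "q + ?L \<le> oc (Suc t)"
  proof (rule ccontr)
    assume "\<not> q + ?L \<le> oc (Suc t)"
    hence "oc (Suc t) - q < ?L" "0 < oc (Suc t) - q" using t oc_less[of t "Suc t"] by auto
    hence "\<not> occurs_at X m (q + (oc (Suc t) - q))" using A by blast
    moreover have "q + (oc (Suc t) - q) = oc (Suc t)" using t oc_less[of t "Suc t"] by simp
    ultimately show False using oc_in by simp
  qed
  have "rw t = Th r'"
  proof (rule nth_equalityI)
    show "length (rw t) = length (Th r')" using le1 le2 t by (simp add: rw_seg)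
    fix d assume "d < length (rw t)"
    hence d: "d < ?L" using le1 le2 t by (simp add: rw_seg)
    have "rw t ! d = X (q + d)" using d le1 le2 t by (simp add: rw_seg seg_nth)
    also have "\<dots> = (Th r' @ u) ! d" using A d by simp
    also have "\<dots> = Th r' ! d" using d by (simp add: nth_append)
    finally show "rw t ! d = Th r' ! d" .
  qed
  hence "Th (Y t) = Th r'" using Th_Y by simp
  hence "Y t = r'" using Th_inj Y_in r' unfolding inj_on_def by blast
  thus "rwat q r'" using t unfolding rwat_def by blast
qed

lemma count_Y: "k1 \<le> k2 \<Longrightarrow> count_list (map Y [k1..<k2]) r' = card {q. oc k1 \<le> q \<and> q < oc k2 \<and> rwat q r'}"
proof -
  assume k: "k1 \<le> k2"
  have e: "{q. oc k1 \<le> q \<and> q < oc k2 \<and> rwat q r'} = oc ` {t\<in>{k1..<k2}. Y t = r'}"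
  proof
    show "{q. oc k1 \<le> q \<and> q < oc k2 \<and> rwat q r'} \<subseteq> oc ` {t\<in>{k1..<k2}. Y t = r'}"
    proof
      fix q assume "q \<in> {q. oc k1 \<le> q \<and> q < oc k2 \<and> rwat q r'}"
      then obtain t where "oc t = q" "Y t = r'" "oc k1 \<le> oc t" "oc t < oc k2" unfolding rwat_def by auto
      thus "q \<in> oc ` {t\<in>{k1..<k2}. Y t = r'}" using oc_le oc_less by auto
    qed
    show "oc ` {t\<in>{k1..<k2}. Y t = r'} \<subseteq> {q. oc k1 \<le> q \<and> q < oc k2 \<and> rwat q r'}"
      using oc_le oc_less unfolding rwat_def by auto
  qed
  have "inj oc" using oc_strict strict_mono_imp_inj_on by blast
  hence "card (oc ` {t\<in>{k1..<k2}. Y t = r'}) = card {t\<in>{k1..<k2}. Y t = r'}"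
    by (meson card_image inj_on_subset subset_UNIV)
  thus ?thesis using e count_upt_card by simp
qed

definition Lmax where "Lmax = G + m"
definition kL where "kL = Lmax + k0"
abbreviation SS where "SS \<equiv> s ^^ kL"
abbreviation B where "B b \<equiv> (sw ^^ kL) [b]"

lemma B_long: "Lmax + 1 \<le> length (B c)"
  unfolding kL_def by (rule long)

definition locprop where
  "locprop Wd q r' \<longleftrightarrow> (\<forall>d < length (Th r') + m. Wd ! (q + d) = (Th r' @ u) ! d) \<and>
                         (\<forall>e. 0 < e \<and> e < length (Th r') \<longrightarrow> \<not> (\<forall>d<m. Wd ! (q + e + d) = u ! d))"

definition cnt where "cnt bc r' = card {t. t < length (B (fst bc)) \<and> locprop (B (fst bc) @ B (snd bc)) t r'}"

lemma local_count:
  assumes r': "r' \<in> R"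
  shows "card {q. SS i \<le> q \<and> q < SS (Suc i) \<and> rwat q r'} = cnt (X i, X (Suc i)) r'"
proof -
  let ?Wd = "B (X i) @ B (X (Suc i))"
  have Bi: "B (X i) = seg (SS i) (SS (Suc i))" by (rule swk_single)
  have Bi2: "B (X (Suc i)) = seg (SS (Suc i)) (SS (Suc (Suc i)))" by (rule swk_single)
  have m1: "SS i \<le> SS (Suc i)" "SS (Suc i) \<le> SS (Suc (Suc i))" using S_strict[of kL] by (auto intro: less_imp_le)
  have Wd: "?Wd = seg (SS i) (SS (Suc (Suc i)))" using Bi Bi2 m1 by (simp add: seg_append)
  have Wnth: "?Wd ! e = X (SS i + e)" if "e < length ?Wd" for e
    using that Wd by (simp add: seg_nth)
  obtain tt where "Th r' = rw tt" using Th_rw[OF r'] by blast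
  hence thL: "length (Th r') \<le> G" using rw_len(1)[of tt] by simp
  have lenB: "length (B (X (Suc i))) > length (Th r') + m"
    using B_long[of "X (Suc i)"] thL unfolding Lmax_def by simp
  have key: "rwat (SS i + t) r' \<longleftrightarrow> locprop ?Wd t r'" if t: "t < length (B (X i))" for t
  proof -
    have bnd: "t + e < length ?Wd" if "e < length (Th r') + m" for e using t lenB that by simp
    have 1: "(\<forall>d < length (Th r') + m. X (SS i + t + d) = (Th r' @ u) ! d) \<longleftrightarrow>
             (\<forall>d < length (Th r') + m. ?Wd ! (t + d) = (Th r' @ u) ! d)"
      using Wnth bnd by (simp add: add.assoc)
    have 2: "occurs_at X m (SS i + t + e) \<longleftrightarrow> (\<forall>d<m. ?Wd ! (t + e + d) = u ! d)" if e: "e < length (Th r')" for e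
    proof -
      have "\<forall>d<m. t + e + d < length ?Wd"
      proof (intro allI impI)
        fix d assume "d < m"
        hence "e + d < length (Th r') + m" using e by simp
        from bnd[OF this] show "t + e + d < length ?Wd" by (simp add: add.assoc)
      qed
      hence "(\<forall>d<m. ?Wd ! (t + e + d) = u ! d) \<longleftrightarrow> (\<forall>d<m. X (SS i + t + e + d) = X d)"
        using Wnth by (simp add: seg_nth add.assoc)
      thus ?thesis unfolding occurs_at_def by simp
    qed
    show ?thesis unfolding rwat_iff[OF r'] locprop_def using 1 2 by auto
  qed
  have "{q. SS i \<le> q \<and> q < SS (Suc i) \<and> rwat q r'} = (\<lambda>t. SS i + t) ` {t. t < length (B (X i)) \<and> locprop ?Wd t r'}"
  proof
    show "{q. SS i \<le> q \<and> q < SS (Suc i) \<and> rwat q r'} \<subseteq> (\<lambda>t. SS i + t) ` {t. t < length (B (X i)) \<and> locprop ?Wd t r'}"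
    proof
      fix q assume q: "q \<in> {q. SS i \<le> q \<and> q < SS (Suc i) \<and> rwat q r'}"
      let ?t = "q - SS i"
      have lt: "?t < length (B (X i))" using q Bi by auto
      have qe: "q = SS i + ?t" using q by auto
      have "locprop ?Wd ?t r'" using key[OF lt] q qe by simp
      hence "?t \<in> {t. t < length (B (X i)) \<and> locprop ?Wd t r'}" using lt by simp
      thus "q \<in> (\<lambda>t. SS i + t) ` {t. t < length (B (X i)) \<and> locprop ?Wd t r'}"
        using qe by (rule rev_image_eqI)
    qed
    show "(\<lambda>t. SS i + t) ` {t. t < length (B (X i)) \<and> locprop ?Wd t r'} \<subseteq> {q. SS i \<le> q \<and> q < SS (Suc i) \<and> rwat q r'}"
    proof
      fix q assume "q \<in> (\<lambda>t. SS i + t) ` {t. t < length (B (X i)) \<and> locprop ?Wd t r'}"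
      then obtain t where t: "t < length (B (X i))" "locprop ?Wd t r'" "q = SS i + t" by blast
      have "rwat q r'" using key[OF t(1)] t by simp
      moreover have "q < SS (Suc i)" using t Bi m1 by simp
      ultimately show "q \<in> {q. SS i \<le> q \<and> q < SS (Suc i) \<and> rwat q r'}" using t by simp
    qed
  qed
  moreover have "inj_on (\<lambda>t. SS i + t) {t. t < length (B (X i)) \<and> locprop ?Wd t r'}" by (rule inj_onI) simp
  ultimately show ?thesis unfolding cnt_def by (simp add: card_image)
qed

lemma bl_seg: assumes "i1 < i2" "X i2 = c"
  shows "bl (seg i1 i2) c = map (\<lambda>i. (X i, X (Suc i))) [i1..<i2]"
proof (rule nth_equalityI)
  show "length (bl (seg i1 i2) c) = length (map (\<lambda>i. (X i, X (Suc i))) [i1..<i2])"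
    using assms by (simp add: bl_def)
  fix k assume "k < length (bl (seg i1 i2) c)"
  hence k: "k < i2 - i1" using assms by (simp add: bl_def)
  have "(tl (seg i1 i2) @ [c]) ! k = X (Suc (i1 + k))"
  proof (cases "k < i2 - i1 - 1")
    case True
    then show ?thesis by (simp add: nth_append seg_nth nth_tl)
  next
    case False
    hence "k = i2 - i1 - 1" using k by simp
    then show ?thesis using assms k by (simp add: nth_append)
  qed
  thus "bl (seg i1 i2) c ! k = map (\<lambda>i. (X i, X (Suc i))) [i1..<i2] ! k"
    using k by (simp add: bl_def seg_nth)
qed

lemma K_count:
  assumes j: "j \<in> R" and r': "r' \<in> R"
  shows "count_list ((swu ^^ kL) [j]) r' = sum_list (map (\<lambda>q. cnt q r') (bl (Th j) a))"
proof -
  obtain t0 where t0: "Th j = rw t0" using Th_rw j by blast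
  have l0: "oc t0 \<le> oc (Suc t0)" "oc t0 < oc (Suc t0)" using oc_le oc_less by auto
  have "occurs_at X m (SS (oc t0))" by (rule occ_s[OF oc_in])
  then obtain k1 where k1: "oc k1 = SS (oc t0)" using oc_all by blast
  have "occurs_at X m (SS (oc (Suc t0)))" by (rule occ_s[OF oc_in])
  then obtain k2 where k2: "oc k2 = SS (oc (Suc t0))" using oc_all by blast
  have "SS (oc t0) \<le> SS (oc (Suc t0))" using swk_seg[OF l0(1)] by blast
  hence k12: "k1 \<le> k2" using k1 k2 oc_le by metis
  have sj: "set [j] \<subseteq> R" using j by simp
  have it: "set ((swu ^^ kL) [j]) \<subseteq> R" "concat (map Th ((swu ^^ kL) [j])) = (sw ^^ kL) (Th j)"
    using swu_iter[OF sj, of kL] by auto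
  have "(sw ^^ kL) (Th j) = seg (oc k1) (oc k2)" using t0 k1 k2 swk_seg[OF l0(1)] by (simp add: rw_seg)
  also have "\<dots> = concat (map Th (map Y [k1..<k2]))" using decode[OF k12] by simp
  finally have e3: "concat (map Th ((swu ^^ kL) [j])) = concat (map Th (map Y [k1..<k2]))" using it(2) by simp
  have "set (map Y [k1..<k2]) \<subseteq> R" using Y_in by auto
  hence "(swu ^^ kL) [j] = map Y [k1..<k2]" using code[OF it(1) _ e3] by blast
  hence "count_list ((swu ^^ kL) [j]) r' = card {q. SS (oc t0) \<le> q \<and> q < SS (oc (Suc t0)) \<and> rwat q r'}"
    using count_Y[OF k12] k1 k2 by simp
  also have "\<dots> = (\<Sum>i\<in>{oc t0..<oc (Suc t0)}. card {q. SS i \<le> q \<and> q < SS (Suc i) \<and> rwat q r'})"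
    by (rule card_split_mono) (use S_mono[of kL] l0 in \<open>auto intro: strict_mono_mono\<close>)
  also have "\<dots> = (\<Sum>i\<in>{oc t0..<oc (Suc t0)}. cnt (X i, X (Suc i)) r')"
    using local_count[OF r'] by simp
  also have "\<dots> = sum_list (map (\<lambda>i. cnt (X i, X (Suc i)) r') [oc t0..<oc (Suc t0)])"
    by (simp add: sum_set_upt_conv_sum_list_nat[symmetric])
  also have "\<dots> = sum_list (map (\<lambda>q. cnt q r') (bl (Th j) a))"
    using bl_seg[OF l0(2) occ_a[OF oc_in[of "Suc t0"]]] t0 by (simp add: rw_seg comp_def)
  finally show ?thesis .
qed

end


lemma ker_det:
  fixes K :: "'i \<Rightarrow> 'i \<Rightarrow> complex"
  assumes e: "bij_betw e {..<n} S"
  shows "(\<exists>v. (\<exists>i\<in>S. v i \<noteq> 0) \<and> (\<forall>i\<in>S. (\<Sum>j\<in>S. K i j * v j) = 0))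
     \<longleftrightarrow> det (mat n n (\<lambda>(i,j). K (e i) (e j))) = 0"
proof -
  let ?A = "mat n n (\<lambda>(i,j). K (e i) (e j))"
  have A: "?A \<in> carrier_mat n n" by auto
  have sumre: "(\<Sum>j\<in>S. h j) = (\<Sum>j<n. h (e j))" for h :: "'i \<Rightarrow> complex"
    using sum.reindex_bij_betw[OF e, of h] by simp
  show ?thesis unfolding det_0_iff_vec_prod_zero[OF A]
  proof
    assume "\<exists>v. (\<exists>i\<in>S. v i \<noteq> 0) \<and> (\<forall>i\<in>S. (\<Sum>j\<in>S. K i j * v j) = 0)"
    then obtain v where v1: "\<exists>i\<in>S. v i \<noteq> 0" and v2: "\<forall>i\<in>S. (\<Sum>j\<in>S. K i j * v j) = 0" by blast
    let ?w = "vec n (\<lambda>i. v (e i))"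
    from v1 obtain i where i: "i \<in> S" "v i \<noteq> 0" by blast
    then obtain k where k: "k < n" "e k = i" using e by (metis bij_betw_def imageE lessThan_iff)
    have "?w \<noteq> 0\<^sub>v n" using k i by (metis index_vec index_zero_vec(1))
    moreover have "?A *\<^sub>v ?w = 0\<^sub>v n"
    proof (rule eq_vecI)
      fix l assume l: "l < dim_vec (0\<^sub>v n :: complex vec)"
      hence ln: "l < n" by simp
      have "e l \<in> S" using e ln by (metis bij_betwE lessThan_iff)
      have "(?A *\<^sub>v ?w) $ l = (\<Sum>j<n. K (e l) (e j) * v (e j))"
        using ln by (simp add: mult_mat_vec_def scalar_prod_def row_def atLeast0LessThan)
      also have "\<dots> = (\<Sum>j\<in>S. K (e l) j * v j)" using sumre by simp
      also have "\<dots> = 0" using v2 \<open>e l \<in> S\<close> by simp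
      finally show "(?A *\<^sub>v ?w) $ l = 0\<^sub>v n $ l" using ln by simp
    qed auto
    ultimately show "\<exists>w. w \<in> carrier_vec n \<and> w \<noteq> 0\<^sub>v n \<and> ?A *\<^sub>v w = 0\<^sub>v n"
      by (intro exI[of _ ?w]) (simp add: vec_carrier)
  next
    assume "\<exists>w. w \<in> carrier_vec n \<and> w \<noteq> 0\<^sub>v n \<and> ?A *\<^sub>v w = 0\<^sub>v n"
    then obtain w where w: "w \<in> carrier_vec n" "w \<noteq> 0\<^sub>v n" "?A *\<^sub>v w = 0\<^sub>v n" by blast
    define v where "v = (\<lambda>x. w $ (inv_into {..<n} e x))"
    have ve: "v (e j) = w $ j" if "j < n" for j
      unfolding v_def using e that by (simp add: bij_betw_inv_into_left)
    from w obtain k where k: "k < n" "w $ k \<noteq> 0"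
      by (metis carrier_vecD eq_vecI index_zero_vec(1) index_zero_vec(2))
    have "e k \<in> S" using e k by (metis bij_betwE lessThan_iff)
    moreover have "v (e k) \<noteq> 0" using ve k by simp
    moreover have "\<forall>i\<in>S. (\<Sum>j\<in>S. K i j * v j) = 0"
    proof
      fix i assume i: "i \<in> S"
      then obtain l where l: "l < n" "e l = i" using e by (metis bij_betw_def imageE lessThan_iff)
      have "(\<Sum>j\<in>S. K i j * v j) = (\<Sum>j<n. K (e l) (e j) * w $ j)"
        using sumre l ve by simp
      also have "\<dots> = (?A *\<^sub>v w) $ l"
        using l w(1) by (simp add: mult_mat_vec_def scalar_prod_def row_def atLeast0LessThan)
      also have "\<dots> = 0" using w(3) l by simp
      finally show "(\<Sum>j\<in>S. K i j * v j) = 0" .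
    qed
    ultimately show "\<exists>v. (\<exists>i\<in>S. v i \<noteq> 0) \<and> (\<forall>i\<in>S. (\<Sum>j\<in>S. K i j * v j) = 0)" by blast
  qed
qed

lemma ker_transpose:
  fixes K :: "'i \<Rightarrow> 'i \<Rightarrow> complex"
  assumes "finite S"
  shows "(\<exists>v. (\<exists>i\<in>S. v i \<noteq> 0) \<and> (\<forall>i\<in>S. (\<Sum>j\<in>S. K i j * v j) = 0))
     \<longleftrightarrow> (\<exists>v. (\<exists>i\<in>S. v i \<noteq> 0) \<and> (\<forall>j\<in>S. (\<Sum>i\<in>S. v i * K i j) = 0))"
proof -
  obtain e where e: "bij_betw e {..<card S} S"
    using assms by (metis atLeast0LessThan ex_bij_betw_nat_finite)
  have 1: "(\<exists>v. (\<exists>i\<in>S. v i \<noteq> 0) \<and> (\<forall>i\<in>S. (\<Sum>j\<in>S. K i j * v j) = 0))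
     \<longleftrightarrow> det (mat (card S) (card S) (\<lambda>(i,j). K (e i) (e j))) = 0" by (rule ker_det[OF e])
  have 2: "(\<exists>v. (\<exists>i\<in>S. v i \<noteq> 0) \<and> (\<forall>i\<in>S. (\<Sum>j\<in>S. K j i * v j) = 0))
     \<longleftrightarrow> det (mat (card S) (card S) (\<lambda>(i,j). K (e j) (e i))) = 0" by (rule ker_det[OF e])
  have 3: "mat (card S) (card S) (\<lambda>(i,j). K (e j) (e i)) = transpose_mat (mat (card S) (card S) (\<lambda>(i,j). K (e i) (e j)))"
    by (rule eq_matI) auto
  have 4: "det (transpose_mat (mat (card S) (card S) (\<lambda>(i,j). K (e i) (e j)))) = det (mat (card S) (card S) (\<lambda>(i,j). K (e i) (e j)))"
    by (rule det_transpose) auto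
  show ?thesis using 1 2 3 4 by (simp add: mult.commute)
qed

lemma eigen_left:
  assumes "finite S"
  shows "is_eigenvalue S M z \<longleftrightarrow>
    (\<exists>f. (\<exists>i\<in>S. f i \<noteq> 0) \<and> (\<forall>j\<in>S. (\<Sum>i\<in>S. f i * of_nat (M i j)) = z * f j))"
proof -
  let ?K = "\<lambda>i j. (of_nat (M i j) :: complex) - (if i = j then z else 0)"
  have a: "(\<Sum>j\<in>S. ?K i j * v j) = (\<Sum>j\<in>S. of_nat (M i j) * v j) - z * v i" if "i \<in> S" for i v
  proof -
    have "(\<Sum>j\<in>S. ?K i j * v j) = (\<Sum>j\<in>S. of_nat (M i j) * v j) - (\<Sum>j\<in>S. (if i = j then z else 0) * v j)"
      by (simp add: left_diff_distrib sum_subtractf)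
    also have "(\<Sum>j\<in>S. (if i = j then z else 0) * v j) = (\<Sum>j\<in>S. (if i = j then z * v j else 0))"
      by (rule sum.cong) auto
    also have "\<dots> = z * v i" using that assms by (simp add: sum.delta)
    finally show ?thesis .
  qed
  have b: "(\<Sum>i\<in>S. v i * ?K i j) = (\<Sum>i\<in>S. v i * of_nat (M i j)) - z * v j" if "j \<in> S" for j v
  proof -
    have "(\<Sum>i\<in>S. v i * ?K i j) = (\<Sum>i\<in>S. v i * of_nat (M i j)) - (\<Sum>i\<in>S. (if i = j then z * v i else 0))"
    proof -
      have "(\<Sum>i\<in>S. v i * ?K i j) = (\<Sum>i\<in>S. v i * of_nat (M i j) - (if i = j then z * v i else 0))"
        by (rule sum.cong) (auto simp: right_diff_distrib mult.commute)
      thus ?thesis by (simp add: sum_subtractf)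
    qed
    also have "(\<Sum>i\<in>S. (if i = j then z * v i else 0)) = z * v j" using that assms by (simp add: sum.delta')
    finally show ?thesis .
  qed
  have 1: "is_eigenvalue S M z \<longleftrightarrow> (\<exists>v. (\<exists>i\<in>S. v i \<noteq> 0) \<and> (\<forall>i\<in>S. (\<Sum>j\<in>S. ?K i j * v j) = 0))"
  proof -
    have "(\<forall>i\<in>S. (\<Sum>j\<in>S. of_nat (M i j) * v j) = z * v i) \<longleftrightarrow> (\<forall>i\<in>S. (\<Sum>j\<in>S. ?K i j * v j) = 0)" for v
      using a[of _ v] by simp
    thus ?thesis unfolding is_eigenvalue_def by simp
  qed
  have 2: "(\<exists>f. (\<exists>i\<in>S. f i \<noteq> 0) \<and> (\<forall>j\<in>S. (\<Sum>i\<in>S. f i * of_nat (M i j)) = z * f j))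
     \<longleftrightarrow> (\<exists>v. (\<exists>i\<in>S. v i \<noteq> 0) \<and> (\<forall>j\<in>S. (\<Sum>i\<in>S. v i * ?K i j) = 0))"
  proof -
    have "(\<forall>j\<in>S. (\<Sum>i\<in>S. v i * of_nat (M i j)) = z * v j) \<longleftrightarrow> (\<forall>j\<in>S. (\<Sum>i\<in>S. v i * ?K i j) = 0)" for v
      using b[of _ v] by simp
    thus ?thesis by simp
  qed
  show ?thesis using 1 2 ker_transpose[OF assms, of ?K] by blast
qed


lemma push_generic:
  fixes v :: "'i \<Rightarrow> complex" and \<sigma> :: "'i \<Rightarrow> 'i list" and \<Phi> :: "'i \<Rightarrow> 'b list"
  assumes S: "finite S" and st: "\<forall>j\<in>S. set (\<sigma> j) \<subseteq> S"
    and ev: "\<forall>i\<in>S. (\<Sum>j\<in>S. of_nat (count_list (\<sigma> j) i) * v j) = z * v i"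
    and ph: "\<forall>j\<in>S. \<Phi> j = concat (map \<Psi> (\<sigma> j))"
  shows "(\<Sum>j\<in>S. of_nat (count_list (\<Phi> j) p) * v j) = z * (\<Sum>r\<in>S. of_nat (count_list (\<Psi> r) p) * v r)"
proof -
  have "(\<Sum>j\<in>S. of_nat (count_list (\<Phi> j) p) * v j)
      = (\<Sum>j\<in>S. \<Sum>r\<in>S. of_nat (count_list (\<sigma> j) r) * of_nat (count_list (\<Psi> r) p) * v j)"
  proof (rule sum.cong)
    fix j assume j: "j \<in> S"
    have "count_list (\<Phi> j) p = (\<Sum>r\<in>S. count_list (\<sigma> j) r * count_list (\<Psi> r) p)"
      using ph j count_concat_map[OF S, of "\<sigma> j" \<Psi> p] st by simp
    thus "of_nat (count_list (\<Phi> j) p) * v j = (\<Sum>r\<in>S. of_nat (count_list (\<sigma> j) r) * of_nat (count_list (\<Psi> r) p) * v j)"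
      by (simp add: sum_distrib_right)
  qed simp
  also have "\<dots> = (\<Sum>r\<in>S. \<Sum>j\<in>S. of_nat (count_list (\<sigma> j) r) * of_nat (count_list (\<Psi> r) p) * v j)"
    by (rule sum.swap)
  also have "\<dots> = (\<Sum>r\<in>S. of_nat (count_list (\<Psi> r) p) * (\<Sum>j\<in>S. of_nat (count_list (\<sigma> j) r) * v j))"
    by (simp add: sum_distrib_left mult_ac)
  also have "\<dots> = (\<Sum>r\<in>S. of_nat (count_list (\<Psi> r) p) * (z * v r))"
    using ev by simp
  also have "\<dots> = z * (\<Sum>r\<in>S. of_nat (count_list (\<Psi> r) p) * v r)"
    by (simp add: sum_distrib_left mult_ac)
  finally show ?thesis .
qed

lemma bl_Nil[simp]: "bl [] c = []" by (simp add: bl_def)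

lemma bl_Cons: "bl (x # y # ys) c = (x, y) # bl (y # ys) c"
  by (simp add: bl_def)

lemma bl_single: "bl [x] c = [(x, c)]" by (simp add: bl_def)

lemma bl_append: "w2 \<noteq> [] \<Longrightarrow> bl (w1 @ w2) c = bl w1 (hd w2) @ bl w2 c"
proof (induction w1)
  case Nil then show ?case by simp
next
  case (Cons x w1)
  show ?case
  proof (cases w1)
    case Nil
    then obtain y ys where "w2 = y # ys" using Cons.prems by (cases w2) auto
    then show ?thesis using Nil by (simp add: bl_Cons bl_single)
  next
    case (Cons y ys)
    then show ?thesis using Cons.IH Cons.prems by (simp add: bl_Cons)
  qed
qed

lemma map_fst_bl: "map fst (bl w c) = w"
  by (cases w) (simp_all add: bl_def)

lemma bl_last: "y \<noteq> [] \<Longrightarrow> bl y d = zip (butlast y) (tl y) @ [(last y, d)]"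
proof -
  assume y: "y \<noteq> []"
  have "y = butlast y @ [last y]" using y by simp
  moreover have "length (butlast y) = length (tl y)" by simp
  ultimately show ?thesis unfolding bl_def by (metis zip_append zip_Cons_Cons zip_Nil)
qed

lemma bl_concat:
  assumes "\<forall>r\<in>set ws. \<exists>ys. \<Theta> r = c # ys"
  shows "bl (concat (map \<Theta> ws)) c = concat (map (\<lambda>r. bl (\<Theta> r) c) ws)"
  using assms
proof (induction ws)
  case Nil then show ?case by simp
next
  case (Cons r ws)
  show ?case
  proof (cases ws)
    case Nil then show ?thesis by simp
  next
    case (Cons r' ws')
    obtain ys where "\<Theta> r' = c # ys" using Cons.prems Cons by auto
    hence "concat (map \<Theta> ws) \<noteq> []" "hd (concat (map \<Theta> ws)) = c" using Cons by auto
    thus ?thesis using Cons.IH Cons.prems by (simp add: bl_append)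
  qed
qed

lemma bl_sw:
  assumes ne: "\<forall>b. t b \<noteq> []"
  shows "bl (subst_word t w) (hd (t c)) = concat (map (\<lambda>q. bl (t (fst q)) (hd (t (snd q)))) (bl w c))"
proof (induction w)
  case Nil then show ?case by simp
next
  case (Cons x w)
  show ?case
  proof (cases w)
    case Nil then show ?thesis by (simp add: bl_single)
  next
    case (Cons y ys)
    have "subst_word t w \<noteq> []" "hd (subst_word t w) = hd (t y)" using Cons ne by auto
    then show ?thesis using Cons.IH Cons by (simp add: bl_append bl_Cons)
  qed
qed

lemma count_split_list:
  "count_list (concat (map (\<lambda>q. A (fst q) @ [\<sigma> q]) L)) p = count_list (concat (map A (map fst L))) p + count_list (map \<sigma> L) p"
  by (induction L) auto

context sub
begin

lemma R_finite: "finite R" by simp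

definition lin :: "(nat \<Rightarrow> complex) \<Rightarrow> (nat \<Rightarrow> 'b list) \<Rightarrow> 'b \<Rightarrow> complex" where
  "lin v \<Phi> p = (\<Sum>j\<in>R. of_nat (count_list (\<Phi> j) p) * v j)"

lemma push:
  assumes ev: "\<forall>i\<in>R. (\<Sum>j\<in>R. of_nat (count_list (tu j) i) * v j) = z * v i"
    and ph: "\<forall>j\<in>R. \<Phi> j = concat (map \<Psi> (tu j))"
  shows "lin v \<Phi> p = z * lin v \<Psi> p"
  unfolding lin_def by (rule push_generic[OF R_finite _ ev ph]) (use tu_spec in blast)

lemma lin_count_sum:
  fixes h :: "nat \<Rightarrow> 'b::finite \<Rightarrow> complex"
  assumes "\<forall>j\<in>R. of_nat (count_list (\<Phi> j) p) = (\<Sum>q\<in>UNIV. of_nat (count_list (\<Psi> j) q) * h j q)"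
  shows "lin v \<Phi> p = (\<Sum>q\<in>UNIV. \<Sum>j\<in>R. of_nat (count_list (\<Psi> j) q) * h j q * v j)"
proof -
  have "lin v \<Phi> p = (\<Sum>j\<in>R. \<Sum>q\<in>UNIV. of_nat (count_list (\<Psi> j) q) * h j q * v j)"
    unfolding lin_def using assms by (simp add: sum_distrib_right)
  also have "\<dots> = (\<Sum>q\<in>UNIV. \<Sum>j\<in>R. of_nat (count_list (\<Psi> j) q) * h j q * v j)" by (rule sum.swap)
  finally show ?thesis .
qed

lemma dir2:
  assumes z: "z \<noteq> 0" "\<not> root_of_unity z"
    and v: "\<exists>r\<in>R. v r \<noteq> 0" and ev: "\<forall>i\<in>R. (\<Sum>j\<in>R. of_nat (count_list (tu j) i) * v j) = z * v i"
  shows "is_eigenvalue UNIV (subst_matrix \<tau>) z"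
proof -
  define Pv where "Pv b = lin v Th b" for b
  have MP: "(\<Sum>b\<in>UNIV. of_nat (subst_matrix \<tau> c b) * Pv b) = z * Pv c" for c
  proof -
    have "(\<Sum>b\<in>UNIV. of_nat (subst_matrix \<tau> c b) * Pv b) = lin v (\<lambda>j. sw (Th j)) c"
    proof -
      have "(\<Sum>b\<in>UNIV. of_nat (subst_matrix \<tau> c b) * Pv b)
          = (\<Sum>b\<in>UNIV. \<Sum>j\<in>R. of_nat (count_list (Th j) b) * of_nat (count_list (\<tau> b) c) * v j)"
        unfolding Pv_def lin_def subst_matrix_def by (simp add: sum_distrib_left mult_ac)
      also have "\<dots> = lin v (\<lambda>j. sw (Th j)) c"
        by (rule lin_count_sum[symmetric]) (simp add: subst_word_def count_concat_map[of UNIV])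
      finally show ?thesis .
    qed
    also have "\<dots> = z * lin v Th c"
      by (rule push[OF ev]) (use tu_spec in simp)
    finally show ?thesis unfolding Pv_def .
  qed
  show ?thesis
  proof (cases "\<exists>b. Pv b \<noteq> 0")
    case True
    then show ?thesis unfolding is_eigenvalue_def using MP by blast
  next
    case False
    hence P0: "Pv b = 0" for b by blast
    define x where "x p = lin v (\<lambda>j. bl (Th j) a) p" for p
    define \<sigma> where "\<sigma> q = (last (\<tau> (fst q)), hd (\<tau> (snd q)))" for q :: "'a \<times> 'a"
    define intl where "intl b = zip (butlast (\<tau> b)) (tl (\<tau> b))" for b
    have xe: "z * x p = (\<Sum>q\<in>{q. \<sigma> q = p}. x q)" for p
    proof -
      have "z * x p = lin v (\<lambda>j. concat (map (\<lambda>r. bl (Th r) a) (tu j))) p"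
        unfolding x_def by (rule push[OF ev, symmetric]) simp
      also have "\<dots> = lin v (\<lambda>j. concat (map (\<lambda>q. intl (fst q) @ [\<sigma> q]) (bl (Th j) a))) p"
      proof -
        have "concat (map (\<lambda>r. bl (Th r) a) (tu j)) = concat (map (\<lambda>q. intl (fst q) @ [\<sigma> q]) (bl (Th j) a))"
          if j: "j \<in> R" for j
        proof -
          have "\<forall>r\<in>set (tu j). \<exists>ys. Th r = a # ys" using tu_spec[OF j] Th_hd by blast
          hence "concat (map (\<lambda>r. bl (Th r) a) (tu j)) = bl (concat (map Th (tu j))) a"
            by (rule bl_concat[symmetric])
          also have "\<dots> = bl (sw (Th j)) (hd (\<tau> a))" using tu_spec[OF j] starts by simp
          also have "\<dots> = concat (map (\<lambda>q. bl (\<tau> (fst q)) (hd (\<tau> (snd q)))) (bl (Th j) a))"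
            by (rule bl_sw[OF nonerasing])
          also have "\<dots> = concat (map (\<lambda>q. intl (fst q) @ [\<sigma> q]) (bl (Th j) a))"
            using nonerasing by (simp add: bl_last intl_def \<sigma>_def)
          finally show ?thesis .
        qed
        thus ?thesis unfolding lin_def by (intro sum.cong) auto
      qed
      also have "\<dots> = lin v (\<lambda>j. concat (map intl (Th j))) p + lin v (\<lambda>j. map \<sigma> (bl (Th j) a)) p"
        unfolding lin_def by (simp add: count_split_list map_fst_bl distrib_right sum.distrib)
      also have "lin v (\<lambda>j. concat (map intl (Th j))) p = 0"
      proof -
        have "lin v (\<lambda>j. concat (map intl (Th j))) p = (\<Sum>b\<in>UNIV. \<Sum>j\<in>R. of_nat (count_list (Th j) b) * of_nat (count_list (intl b) p) * v j)"
          by (rule lin_count_sum) (simp add: count_concat_map[of UNIV])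
        also have "\<dots> = (\<Sum>b\<in>UNIV. of_nat (count_list (intl b) p) * Pv b)"
          unfolding Pv_def lin_def by (simp add: sum_distrib_left mult_ac)
        finally show ?thesis using P0 by simp
      qed
      also have "lin v (\<lambda>j. map \<sigma> (bl (Th j) a)) p = (\<Sum>q\<in>{q. \<sigma> q = p}. x q)"
      proof -
        have "lin v (\<lambda>j. map \<sigma> (bl (Th j) a)) p = (\<Sum>j\<in>R. \<Sum>q\<in>{q. \<sigma> q = p}. of_nat (count_list (bl (Th j) a) q) * v j)"
          unfolding lin_def by (simp add: count_map_fun sum_distrib_right)
        also have "\<dots> = (\<Sum>q\<in>{q. \<sigma> q = p}. \<Sum>j\<in>R. of_nat (count_list (bl (Th j) a) q) * v j)"
          by (rule sum.swap)
        finally show ?thesis unfolding x_def lin_def .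
      qed
      finally show ?thesis by simp
    qed
    have x0: "x = (\<lambda>_. 0)" using fun_matrix_eigen_zero[where \<sigma>=\<sigma> and x=x and z=z] xe z by blast
    have pw: "lin v (\<lambda>j. (swu ^^ k) [j]) r' = z ^ k * v r'" if r': "r' \<in> R" for k r'
    proof (induction k)
      case 0
      have "lin v (\<lambda>j. (swu ^^ 0) [j]) r' = (\<Sum>j\<in>R. (if j = r' then v j else 0))"
        unfolding lin_def by (intro sum.cong) auto
      also have "\<dots> = v r'" using r' by (simp add: sum.delta')
      finally show ?case by simp
    next
      case (Suc k)
      have "lin v (\<lambda>j. (swu ^^ Suc k) [j]) r' = z * lin v (\<lambda>j. (swu ^^ k) [j]) r'"
      proof (rule push[OF ev])
        show "\<forall>j\<in>R. (swu ^^ Suc k) [j] = concat (map (\<lambda>r. (swu ^^ k) [r]) (tu j))"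
          by (metis swk_Suc_single swk_as_concat)
      qed
      then show ?case using Suc by simp
    qed
    have "v r' = 0" if r': "r' \<in> R" for r'
    proof -
      have "z ^ kL * v r' = lin v (\<lambda>j. (swu ^^ kL) [j]) r'" using pw[OF r'] by simp
      also have "\<dots> = (\<Sum>q\<in>UNIV. \<Sum>j\<in>R. of_nat (count_list (bl (Th j) a) q) * of_nat (cnt q r') * v j)"
      proof -
        have eqj: "\<forall>j\<in>R. (of_nat (count_list ((swu ^^ kL) [j]) r') :: complex) = (\<Sum>q\<in>UNIV. of_nat (count_list (bl (Th j) a) q) * of_nat (cnt q r'))"
        proof
          fix j assume j: "j \<in> R"
          have "count_list ((swu ^^ kL) [j]) r' = sum_list (map (\<lambda>q. cnt q r') (bl (Th j) a))"
            by (rule K_count[OF j r'])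
          also have "\<dots> = (\<Sum>q\<in>UNIV. of_nat (count_list (bl (Th j) a) q) * cnt q r')"
            by (rule sum_list_count) auto
          finally show "(of_nat (count_list ((swu ^^ kL) [j]) r') :: complex) = (\<Sum>q\<in>UNIV. of_nat (count_list (bl (Th j) a) q) * of_nat (cnt q r'))"
            by simp
        qed
        show ?thesis by (rule lin_count_sum[OF eqj])
      qed
      also have "\<dots> = (\<Sum>q\<in>UNIV. of_nat (cnt q r') * x q)"
        unfolding x_def lin_def by (simp add: sum_distrib_left mult_ac)
      also have "\<dots> = 0" using x0 by simp
      finally show ?thesis using z(1) by simp
    qed
    thus ?thesis using v by blast
  qed
qed

lemma dir1:
  assumes z: "z \<noteq> 0" "\<not> root_of_unity z"
    and f: "\<exists>i\<in>UNIV. f i \<noteq> 0" and ev: "\<forall>j\<in>UNIV. (\<Sum>i\<in>UNIV. f i * of_nat (subst_matrix \<tau> i j)) = z * f j"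
  shows "\<exists>g. (\<exists>r\<in>R. g r \<noteq> 0) \<and> (\<forall>j\<in>R. (\<Sum>r\<in>R. g r * of_nat (subst_matrix tu r j)) = z * g j)"
proof -
  define fw where "fw w = sum_list (map f w)" for w
  have f1: "fw (\<tau> j) = z * f j" for j
  proof -
    have "fw (\<tau> j) = (\<Sum>i\<in>UNIV. of_nat (count_list (\<tau> j) i) * f i)"
      unfolding fw_def by (rule sum_list_count) auto
    thus ?thesis using ev by (simp add: subst_matrix_def mult.commute)
  qed
  have f2: "fw (sw w) = z * fw w" for w
    by (induction w) (auto simp: fw_def f1[unfolded fw_def] distrib_left)
  have fk: "fw ((sw ^^ k) w) = z ^ k * fw w" for k w
    by (induction k) (auto simp: f2)
  have fc: "fw (concat (map Th ws)) = sum_list (map (\<lambda>r. fw (Th r)) ws)" for ws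
    by (induction ws) (auto simp: fw_def)
  define g where "g r = fw (Th r)" for r
  have geig: "\<forall>j\<in>R. (\<Sum>r\<in>R. g r * of_nat (subst_matrix tu r j)) = z * g j"
  proof
    fix j assume j: "j \<in> R"
    have "(\<Sum>r\<in>R. g r * of_nat (subst_matrix tu r j)) = sum_list (map g (tu j))"
      using sum_list_count[OF R_finite, of "tu j" g] tu_spec[OF j] by (simp add: subst_matrix_def mult.commute)
    also have "\<dots> = fw (concat (map Th (tu j)))"
    proof -
      have "g = (\<lambda>r. fw (Th r))" using g_def by auto
      thus ?thesis by (simp add: fc)
    qed
    also have "\<dots> = z * g j" using tu_spec[OF j] f2 by (simp add: g_def)
    finally show "(\<Sum>r\<in>R. g r * of_nat (subst_matrix tu r j)) = z * g j" .
  qed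
  have "\<exists>r\<in>R. g r \<noteq> 0"
  proof (rule ccontr)
    assume "\<not> (\<exists>r\<in>R. g r \<noteq> 0)"
    hence g0: "g r = 0" if "r \<in> R" for r using that by blast
    have rw0: "fw (rw t) = 0" for t using g0[OF Y_in[of t]] Th_Y[of t] by (simp add: g_def)
    define F where "F i = fw (seg 0 i)" for i
    have Foc: "F (oc t) = 0" for t
    proof -
      have "seg 0 (oc t) = concat (map Th (map Y [0..<t]))" using decode[of 0 t] oc_0 by simp
      hence "F (oc t) = sum_list (map (\<lambda>r. fw (Th r)) (map Y [0..<t]))" unfolding F_def by (simp only: fc)
      also have "\<dots> = sum_list (map (\<lambda>i. fw (rw i)) [0..<t])"
      proof -
        have "(\<lambda>r. fw (Th r)) \<circ> Y = (\<lambda>i. fw (rw i))" by (rule ext) (simp add: Th_Y)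
        thus ?thesis by simp
      qed
      also have "\<dots> = 0" using rw0 by simp
      finally show ?thesis .
    qed
    define V where "V = fw ` {w. length w \<le> G}"
    have Vfin: "finite V"
    proof -
      have "finite {w::'a list. length w \<le> G}" using finite_lists_length_le[of "UNIV::'a set" G] by simp
      thus ?thesis unfolding V_def by simp
    qed
    have FV: "F i \<in> V" for i
    proof -
      obtain t where t: "oc t \<le> i" "i < oc (Suc t)" using oc_locate by blast
      have "seg 0 i = seg 0 (oc t) @ seg (oc t) i" using seg_append[of 0 "oc t" i] t by simp
      hence "F i = F (oc t) + fw (seg (oc t) i)" unfolding F_def fw_def by simp
      hence "F i = fw (seg (oc t) i)" using Foc by simp
      moreover have "length (seg (oc t) i) \<le> G" using t oc_gap[of t] by simp
      ultimately show ?thesis unfolding V_def by blast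
    qed
    have Fs: "F ((s ^^ n) i) = z ^ n * F i" for n i
      unfolding F_def using fk[of n "seg 0 i"] swk_seg0[of n i] by simp
    have F0: "F i = 0" for i
    proof (rule finite_orbit_zero[OF Vfin _ z])
      show "\<forall>n. z ^ n * F i \<in> V" using FV Fs by (metis)
    qed
    have "f b = 0" for b
    proof -
      obtain i where i: "X i = b" using letter_occurs by blast
      have "seg 0 (Suc i) = seg 0 i @ [X i]" using seg_append[of 0 i "Suc i"] seg_single[of i] by simp
      hence "F (Suc i) = F i + f (X i)" unfolding F_def fw_def by simp
      thus ?thesis using F0 i by simp
    qed
    thus False using f by simp
  qed
  thus ?thesis using geig by blast
qed

end

theorem proposition10:
  fixes \<tau> :: "'a::finite \<Rightarrow> 'a list" and a :: 'a and m :: nat and z :: complex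
  assumes nonerasing: "\<forall>b. \<tau> b \<noteq> []"
    and starts: "hd (\<tau> a) = a"
    and growing: "2 \<le> length (\<tau> a)"
    and prim: "primitive_mat UNIV (subst_matrix \<tau>)"
    and m_pos: "1 \<le> m"
    and nz: "z \<noteq> 0"
    and nru: "\<not> root_of_unity z"
  shows "is_eigenvalue UNIV (subst_matrix \<tau>) z \<longleftrightarrow>
         is_eigenvalue {1..num_ret (fixpt \<tau> a) m}
           (subst_matrix (return_subst \<tau> (fixpt \<tau> a) m)) z"
proof -
  interpret sub \<tau> a m using assms by unfold_locales
  show ?thesis
  proof
    assume "is_eigenvalue UNIV (subst_matrix \<tau>) z"
    then obtain f where f: "\<exists>i\<in>UNIV. f i \<noteq> 0" "\<forall>j\<in>UNIV. (\<Sum>i\<in>UNIV. f i * of_nat (subst_matrix \<tau> i j)) = z * f j"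
      using eigen_left[of UNIV "subst_matrix \<tau>" z] by auto
    obtain g where "(\<exists>r\<in>R. g r \<noteq> 0) \<and> (\<forall>j\<in>R. (\<Sum>r\<in>R. g r * of_nat (subst_matrix tu r j)) = z * g j)"
      using dir1[OF nz nru f] by blast
    thus "is_eigenvalue R (subst_matrix tu) z"
      using eigen_left[OF R_finite, of "subst_matrix tu" z] by blast
  next
    assume "is_eigenvalue R (subst_matrix tu) z"
    then obtain v where "\<exists>r\<in>R. v r \<noteq> 0" "\<forall>i\<in>R. (\<Sum>j\<in>R. of_nat (count_list (tu j) i) * v j) = z * v i"
      unfolding is_eigenvalue_def subst_matrix_def by blast
    thus "is_eigenvalue UNIV (subst_matrix \<tau>) z" using dir2[OF nz nru] by blast
  qed
qed


end
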